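(* Let $\mathcal{V}_t$ be a variety of $\Omega$-algebras satisfying $t(x,y)=x$ for some $t\in T_2$, and let $\mathcal{W}$ be any variety of $\Omega$-algebras. Then the relative Mal'tsev product $\mathcal{V}_t\circ_{\mathcal{W}}\mathcal{S}$ is a variety.
   Context: $\Omega$-algebras are of a plural similarity type (no nullary operation symbols, at least one operation symbol of arity $\ge2$). $T_2$ is the set of binary $\Omega$-terms in $x_1,x_2$ in which both variables occur. An identity is regular if the same variables occur on both sides; $\mathcal{S}$ is the variety of $\Omega$-algebras satisfying all regular identities. The relative Mal'tsev product $\mathcal{V}\circ_{\mathcal{W}}\mathcal{S}$ is the class of all $A\in\mathcal{W}$ having a congruence $\theta$ with $A/\theta\in\mathcal{S}$ and every $\theta$-class (a subalgebra) in $\mathcal{V}$; equivalently $\mathcal{W}\cap(\mathcal{V}\circ\mathcal{S})$. *)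

theory Defs
  imports Main "HOL-Library.FuncSet"
begin

definition plural :: "('f \<Rightarrow> nat) \<Rightarrow> bool" where
  "plural ar \<longleftrightarrow> (\<forall>f. ar f \<ge> 1) \<and> (\<exists>f. ar f \<ge> 2)"

datatype ('f, 'v) trm = Var 'v | App 'f "('f, 'v) trm list"

fun wf_trm :: "('f \<Rightarrow> nat) \<Rightarrow> ('f, 'v) trm \<Rightarrow> bool" where
  "wf_trm ar (Var v) = True"
| "wf_trm ar (App f ts) = (length ts = ar f \<and> (\<forall>t\<in>set ts. wf_trm ar t))"

fun vars :: "('f, 'v) trm \<Rightarrow> 'v set" where
  "vars (Var v) = {v}"
| "vars (App f ts) = (\<Union>t\<in>set ts. vars t)"

record ('f, 'a) alg =
  car :: "'a set"
  opr :: "'f \<Rightarrow> 'a list \<Rightarrow> 'a"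

definition is_alg :: "('f \<Rightarrow> nat) \<Rightarrow> ('f, 'a) alg \<Rightarrow> bool" where
  "is_alg ar A \<longleftrightarrow> car A \<noteq> {} \<and>
     (\<forall>f xs. length xs = ar f \<and> set xs \<subseteq> car A \<longrightarrow> opr A f xs \<in> car A)"

fun eval :: "('f, 'a) alg \<Rightarrow> ('v \<Rightarrow> 'a) \<Rightarrow> ('f, 'v) trm \<Rightarrow> 'a" where
  "eval A \<rho> (Var v) = \<rho> v"
| "eval A \<rho> (App f ts) = opr A f (map (eval A \<rho>) ts)"

type_synonym 'f idt = "('f, nat) trm \<times> ('f, nat) trm"

definition sat :: "('f, 'a) alg \<Rightarrow> 'f idt \<Rightarrow> bool" where
  "sat A e \<longleftrightarrow> (\<forall>\<rho>. (\<forall>v. \<rho> v \<in> car A) \<longrightarrow> eval A \<rho> (fst e) = eval A \<rho> (snd e))"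

definition wf_idt :: "('f \<Rightarrow> nat) \<Rightarrow> 'f idt \<Rightarrow> bool" where
  "wf_idt ar e \<longleftrightarrow> wf_trm ar (fst e) \<and> wf_trm ar (snd e)"

definition Mod :: "('f \<Rightarrow> nat) \<Rightarrow> 'f idt set \<Rightarrow> ('f, 'a) alg \<Rightarrow> bool" where
  "Mod ar \<Sigma> A \<longleftrightarrow> is_alg ar A \<and> (\<forall>e\<in>\<Sigma>. sat A e)"

definition regular_idts :: "('f \<Rightarrow> nat) \<Rightarrow> 'f idt set" where
  "regular_idts ar = {e. wf_idt ar e \<and> vars (fst e) = vars (snd e)}"

abbreviation S_var :: "('f \<Rightarrow> nat) \<Rightarrow> ('f, 'a) alg \<Rightarrow> bool" where
  "S_var ar \<equiv> Mod ar (regular_idts ar)"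

definition congruence :: "('f \<Rightarrow> nat) \<Rightarrow> ('f, 'a) alg \<Rightarrow> ('a \<times> 'a) set \<Rightarrow> bool" where
  "congruence ar A \<theta> \<longleftrightarrow> equiv (car A) \<theta> \<and>
     (\<forall>f xs ys. length xs = ar f \<and> length ys = ar f \<and> list_all2 (\<lambda>x y. (x, y) \<in> \<theta>) xs ys
        \<longrightarrow> (opr A f xs, opr A f ys) \<in> \<theta>)"

definition quot_alg :: "('f, 'a) alg \<Rightarrow> ('a \<times> 'a) set \<Rightarrow> ('f, 'a set) alg" where
  "quot_alg A \<theta> = \<lparr> car = car A // \<theta>,
      opr = (\<lambda>f Xs. \<theta> `` {opr A f (map (\<lambda>X. SOME x. x \<in> X) Xs)}) \<rparr>"

definition class_alg :: "('f, 'a) alg \<Rightarrow> ('a \<times> 'a) set \<Rightarrow> 'a \<Rightarrow> ('f, 'a) alg" where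
  "class_alg A \<theta> a = \<lparr> car = \<theta> `` {a}, opr = opr A \<rparr>"

text \<open>Relative Mal'tsev product V o_W S, V = Mod(SigV), W = Mod(SigW):
  all A in W with a congruence theta such that A/theta is in S and every theta-class
  is a subalgebra lying in V.\<close>
definition relmal :: "('f \<Rightarrow> nat) \<Rightarrow> 'f idt set \<Rightarrow> 'f idt set \<Rightarrow> ('f, 'a) alg \<Rightarrow> bool" where
  "relmal ar \<Sigma>V \<Sigma>W A \<longleftrightarrow> Mod ar \<Sigma>W A \<and>
     (\<exists>\<theta>. congruence ar A \<theta> \<and> S_var ar (quot_alg A \<theta>) \<and>
          (\<forall>a\<in>car A. Mod ar \<Sigma>V (class_alg A \<theta> a)))"

text \<open>Homomorphisms, subalgebras, direct products (for the HSP characterisation of varieties).\<close>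
definition hom :: "('f \<Rightarrow> nat) \<Rightarrow> ('f, 'a) alg \<Rightarrow> ('f, 'b) alg \<Rightarrow> ('a \<Rightarrow> 'b) \<Rightarrow> bool" where
  "hom ar A B h \<longleftrightarrow> (\<forall>x\<in>car A. h x \<in> car B) \<and>
     (\<forall>f xs. length xs = ar f \<and> set xs \<subseteq> car A \<longrightarrow> h (opr A f xs) = opr B f (map h xs))"

definition subalg :: "('f \<Rightarrow> nat) \<Rightarrow> ('f, 'a) alg \<Rightarrow> ('f, 'a) alg \<Rightarrow> bool" where
  "subalg ar B A \<longleftrightarrow> is_alg ar B \<and> car B \<subseteq> car A \<and>
     (\<forall>f xs. length xs = ar f \<and> set xs \<subseteq> car B \<longrightarrow> opr B f xs = opr A f xs)"

definition prod_alg :: "'i set \<Rightarrow> ('i \<Rightarrow> ('f, 'a) alg) \<Rightarrow> ('f, 'i \<Rightarrow> 'a) alg" where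
  "prod_alg I As = \<lparr> car = (\<Pi>\<^sub>E i\<in>I. car (As i)),
      opr = (\<lambda>f xs. \<lambda>i\<in>I. opr (As i) f (map (\<lambda>x. x i) xs)) \<rparr>"

text \<open>T_2: binary terms in x_1, x_2 (here Var 0, Var 1) in which both variables occur.\<close>
definition T2 :: "('f \<Rightarrow> nat) \<Rightarrow> ('f, nat) trm set" where
  "T2 ar = {t. wf_trm ar t \<and> vars t = {0, 1}}"

end

theory Submission
  imports Defs
begin

fun subst :: "('v \<Rightarrow> ('f,'w) trm) \<Rightarrow> ('f,'v) trm \<Rightarrow> ('f,'w) trm" where
  "subst \<sigma> (Var v) = \<sigma> v"
| "subst \<sigma> (App f ts) = App f (map (subst \<sigma>) ts)"

lemma eval_subst: "eval A \<rho> (subst \<sigma> u) = eval A (\<lambda>v. eval A \<rho> (\<sigma> v)) u"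
  by (induction u) (auto cong: map_cong)

lemma vars_subst: "vars (subst \<sigma> u) = (\<Union>v\<in>vars u. vars (\<sigma> v))"
  by (induction u) auto

lemma wf_subst: "wf_trm ar u \<Longrightarrow> (\<And>v. wf_trm ar (\<sigma> v)) \<Longrightarrow> wf_trm ar (subst \<sigma> u)"
  by (induction u) auto

lemma finite_vars: "finite (vars u)"
  by (induction u) auto

lemma eval_vars: "(\<And>v. v \<in> vars u \<Longrightarrow> \<rho> v = \<rho>' v) \<Longrightarrow> eval A \<rho> u = eval A \<rho>' u"
proof (induction u)
  case (App f ts)
  then show ?case by (auto intro!: arg_cong[where f="opr A f"] map_cong)
qed auto

lemma eval_closed: "is_alg ar A \<Longrightarrow> wf_trm ar u \<Longrightarrow> (\<And>v. \<rho> v \<in> car A) \<Longrightarrow> eval A \<rho> u \<in> car A"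
proof (induction u)
  case (App f ts)
  then have "set (map (eval A \<rho>) ts) \<subseteq> car A" "length (map (eval A \<rho>) ts) = ar f" by auto
  then show ?case using App.prems(1) unfolding is_alg_def by auto
qed auto

lemma eval_hom: "hom ar A B h \<Longrightarrow> is_alg ar A \<Longrightarrow> wf_trm ar u \<Longrightarrow> (\<And>v. \<rho> v \<in> car A)
   \<Longrightarrow> h (eval A \<rho> u) = eval B (h \<circ> \<rho>) u"
proof (induction u)
  case (App f ts)
  have "set (map (eval A \<rho>) ts) \<subseteq> car A" "length (map (eval A \<rho>) ts) = ar f"
    using App.prems eval_closed[of ar A _ \<rho>] by auto
  then have "h (eval A \<rho> (App f ts)) = opr B f (map h (map (eval A \<rho>) ts))"
    using App.prems(1) unfolding hom_def by simp
  also have "\<dots> = eval B (h \<circ> \<rho>) (App f ts)"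
    using App by (auto simp: o_def intro!: arg_cong[where f="opr B f"])
  finally show ?case .
qed auto

lemma eval_sub: "subalg ar B A \<Longrightarrow> wf_trm ar u \<Longrightarrow> (\<And>v. \<rho> v \<in> car B) \<Longrightarrow> eval B \<rho> u = eval A \<rho> u"
proof (induction u)
  case (App f ts)
  have "is_alg ar B" using App.prems unfolding subalg_def by auto
  then have "set (map (eval B \<rho>) ts) \<subseteq> car B" using App.prems eval_closed[of ar B _ \<rho>] by auto
  then have "eval B \<rho> (App f ts) = opr A f (map (eval B \<rho>) ts)"
    using App.prems unfolding subalg_def by auto
  also have "\<dots> = eval A \<rho> (App f ts)" using App by (auto intro!: arg_cong[where f="opr A f"])
  finally show ?case .
qed auto

lemma eval_cong: "congruence ar A \<theta> \<Longrightarrow> wf_trm ar u \<Longrightarrow> (\<And>v. (\<rho> v, \<rho>' v) \<in> \<theta>)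
  \<Longrightarrow> (eval A \<rho> u, eval A \<rho>' u) \<in> \<theta>"
proof (induction u)
  case (App f ts)
  have "list_all2 (\<lambda>x y. (x, y) \<in> \<theta>) (map (eval A \<rho>) ts) (map (eval A \<rho>') ts)"
    using App by (auto simp: list.rel_map list_all2_same)
  then show ?case using App.prems unfolding congruence_def by auto
qed auto

lemma eval_class: "eval (class_alg A \<theta> a) \<rho> u = eval A \<rho> u"
  by (induction u) (auto simp: class_alg_def cong: map_cong)

lemma eval_quot:
  assumes "congruence ar A \<theta>" "is_alg ar A" "\<And>v. \<rho> v \<in> car A"
  shows "wf_trm ar u \<Longrightarrow> eval (quot_alg A \<theta>) (\<lambda>v. \<theta> `` {\<rho> v}) u = \<theta> `` {eval A \<rho> u}"
proof (induction u)
  case (App f ts)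
  have eq: "equiv (car A) \<theta>" using assms unfolding congruence_def by auto
  let ?rs = "map (\<lambda>s. SOME x. x \<in> \<theta> `` {eval A \<rho> s}) ts"
  have "list_all2 (\<lambda>x y. (x, y) \<in> \<theta>) (map (eval A \<rho>) ts) ?rs"
  proof -
    have "(eval A \<rho> s, SOME x. x \<in> \<theta> `` {eval A \<rho> s}) \<in> \<theta>" if "s \<in> set ts" for s
    proof -
      have "eval A \<rho> s \<in> car A" using eval_closed[OF assms(2)] assms(3) App.prems that by auto
      then have "eval A \<rho> s \<in> \<theta> `` {eval A \<rho> s}" using eq by (auto elim: equivE refl_onD)
      then have "(SOME x. x \<in> \<theta> `` {eval A \<rho> s}) \<in> \<theta> `` {eval A \<rho> s}" by (rule someI)
      then show ?thesis by auto
    qed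
    then show ?thesis by (auto simp: list.rel_map list_all2_same)
  qed
  then have rel: "(opr A f (map (eval A \<rho>) ts), opr A f ?rs) \<in> \<theta>"
    using assms(1) App.prems unfolding congruence_def by auto
  have "eval (quot_alg A \<theta>) (\<lambda>v. \<theta> `` {\<rho> v}) (App f ts) = \<theta> `` {opr A f ?rs}"
    using App by (simp add: quot_alg_def o_def cong: map_cong)
  also have "\<dots> = \<theta> `` {eval A \<rho> (App f ts)}"
    using rel eq by (simp add: equiv_class_eq)
  finally show ?case .
qed simp

lemma eval_prod: "(\<And>v. \<rho> v \<in> car (prod_alg I As)) \<Longrightarrow>
  eval (prod_alg I As) \<rho> u = (\<lambda>i\<in>I. eval (As i) (\<lambda>v. \<rho> v i) u)"
proof (induction u)
  case (Var x)
  then have "\<rho> x \<in> (\<Pi>\<^sub>E i\<in>I. car (As i))" by (simp add: prod_alg_def)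
  from PiE_restrict[OF this] show ?case by simp
next
  case (App f ts)
  have "eval (prod_alg I As) \<rho> (App f ts) = (\<lambda>i\<in>I. opr (As i) f (map (\<lambda>x. x i) (map (eval (prod_alg I As) \<rho>) ts)))"
    by (simp add: prod_alg_def)
  also have "\<dots> = (\<lambda>i\<in>I. eval (As i) (\<lambda>v. \<rho> v i) (App f ts))"
  proof (rule restrict_ext)
    fix i assume i: "i \<in> I"
    have m: "map (\<lambda>x. x i) (map (eval (prod_alg I As) \<rho>) ts) = map (eval (As i) (\<lambda>v. \<rho> v i)) ts"
      using App.IH[OF _ App.prems] i by simp
    show "opr (As i) f (map (\<lambda>x. x i) (map (eval (prod_alg I As) \<rho>) ts)) = eval (As i) (\<lambda>v. \<rho> v i) (App f ts)"
      by (simp only: eval.simps m)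
  qed
  finally show ?case .
qed



lemma is_alg_prod: assumes "\<forall>i\<in>I. is_alg ar (As i)" shows "is_alg ar (prod_alg I As)"
  unfolding is_alg_def
proof (intro conjI allI impI)
  show "car (prod_alg I As) \<noteq> {}" using assms by (auto simp: prod_alg_def is_alg_def PiE_eq_empty_iff)
  fix f xs assume h: "length xs = ar f \<and> set xs \<subseteq> car (prod_alg I As)"
  { fix i assume i: "i\<in>I"
    have "set (map (\<lambda>x. x i) xs) \<subseteq> car (As i)" using h i by (auto simp: prod_alg_def)
    then have "opr (As i) f (map (\<lambda>x. x i) xs) \<in> car (As i)" using assms i h unfolding is_alg_def by auto }
  then show "opr (prod_alg I As) f xs \<in> car (prod_alg I As)" by (auto simp: prod_alg_def)
qed

lemma Mod_hom:
  assumes "Mod ar \<Sigma> A" "is_alg ar B" "hom ar A B h" "h ` car A = car B" "\<forall>e\<in>\<Sigma>. wf_idt ar e"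
  shows "Mod ar \<Sigma> B"
  unfolding Mod_def sat_def
proof (intro conjI ballI allI impI)
  show "is_alg ar B" by fact
  fix e and \<rho> :: "nat \<Rightarrow> _" assume e: "e \<in> \<Sigma>" and \<rho>: "\<forall>v. \<rho> v \<in> car B"
  define \<sigma> where "\<sigma> v = (SOME x. x \<in> car A \<and> h x = \<rho> v)" for v
  have \<sigma>: "\<sigma> v \<in> car A \<and> h (\<sigma> v) = \<rho> v" for v
  proof -
    have "\<rho> v \<in> h ` car A" using \<rho> assms(4) by auto
    then obtain x where "x \<in> car A" "h x = \<rho> v" by auto
    then show ?thesis unfolding \<sigma>_def by (intro someI[of "\<lambda>x. x \<in> car A \<and> h x = \<rho> v"]) auto
  qed
  have hs: "h \<circ> \<sigma> = \<rho>" using \<sigma> by (auto simp: fun_eq_iff)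
  have isA: "is_alg ar A" and sA: "sat A e" using assms(1) e unfolding Mod_def by auto
  have wf: "wf_trm ar (fst e)" "wf_trm ar (snd e)" using assms(5) e unfolding wf_idt_def by auto
  have "eval B \<rho> (fst e) = h (eval A \<sigma> (fst e))" using eval_hom[OF assms(3) isA wf(1)] \<sigma> hs by auto
  also have "\<dots> = h (eval A \<sigma> (snd e))"
  proof -
    have "\<forall>v. \<sigma> v \<in> car A" using \<sigma> by auto
    then show ?thesis using sA unfolding sat_def by simp
  qed
  also have "\<dots> = eval B \<rho> (snd e)" using eval_hom[OF assms(3) isA wf(2)] \<sigma> hs by auto
  finally show "eval B \<rho> (fst e) = eval B \<rho> (snd e)" .
qed

lemma Mod_sub: assumes "Mod ar \<Sigma> A" "subalg ar B A" "\<forall>e\<in>\<Sigma>. wf_idt ar e" shows "Mod ar \<Sigma> B"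
  unfolding Mod_def sat_def
proof (intro conjI ballI allI impI)
  show "is_alg ar B" using assms(2) unfolding subalg_def by auto
  fix e and \<rho> :: "nat \<Rightarrow> _" assume e: "e\<in>\<Sigma>" and \<rho>: "\<forall>v. \<rho> v \<in> car B"
  have \<rho>A: "\<forall>v. \<rho> v \<in> car A" using \<rho> assms(2) unfolding subalg_def by auto
  have wf: "wf_trm ar (fst e)" "wf_trm ar (snd e)" using assms(3) e unfolding wf_idt_def by auto
  have "sat A e" using assms(1) e unfolding Mod_def by simp
  then have "eval A \<rho> (fst e) = eval A \<rho> (snd e)" using \<rho>A unfolding sat_def by simp
  then show "eval B \<rho> (fst e) = eval B \<rho> (snd e)"
    using eval_sub[OF assms(2) wf(1), of \<rho>] eval_sub[OF assms(2) wf(2), of \<rho>] \<rho> by simp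
qed

lemma Mod_prod: assumes "\<forall>i\<in>I. Mod ar \<Sigma> (As i)" shows "Mod ar \<Sigma> (prod_alg I As)"
  unfolding Mod_def sat_def
proof (intro conjI ballI allI impI)
  have "\<forall>i\<in>I. is_alg ar (As i)" using assms unfolding Mod_def by simp
  then show "is_alg ar (prod_alg I As)" by (rule is_alg_prod)
  fix e and \<rho> :: "nat \<Rightarrow> _" assume e: "e\<in>\<Sigma>" and \<rho>: "\<forall>v. \<rho> v \<in> car (prod_alg I As)"
  have "\<forall>i\<in>I. \<forall>v. \<rho> v i \<in> car (As i)"
  proof (intro ballI allI)
    fix i v assume i: "i \<in> I"
    from \<rho> have "\<rho> v \<in> (\<Pi>\<^sub>E i\<in>I. car (As i))" by (simp add: prod_alg_def)
    then show "\<rho> v i \<in> car (As i)" using i by (rule PiE_mem)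
  qed
  have ev: "eval (As i) (\<lambda>v. \<rho> v i) (fst e) = eval (As i) (\<lambda>v. \<rho> v i) (snd e)" if i: "i \<in> I" for i
  proof -
    have "sat (As i) e" using assms e i unfolding Mod_def by simp
    then show ?thesis using \<open>\<forall>i\<in>I. \<forall>v. \<rho> v i \<in> car (As i)\<close> i unfolding sat_def by simp
  qed
  have \<rho>': "\<And>v. \<rho> v \<in> car (prod_alg I As)" using \<rho> by simp
  show "eval (prod_alg I As) \<rho> (fst e) = eval (prod_alg I As) \<rho> (snd e)"
    unfolding eval_prod[OF \<rho>'] by (rule restrict_ext) (rule ev)
qed

definition reg :: "('f \<Rightarrow> nat) \<Rightarrow> ('f, 'a) alg \<Rightarrow> ('a \<times> 'a) set \<Rightarrow> bool" where
  "reg ar A \<theta> \<longleftrightarrow> (\<forall>(u::('f,nat) trm) v \<rho>. wf_trm ar u \<and> wf_trm ar v \<and> vars u = vars v \<and> (\<forall>x. \<rho> x \<in> car A)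
      \<longrightarrow> (eval A \<rho> u, eval A \<rho> v) \<in> \<theta>)"

definition good :: "('f \<Rightarrow> nat) \<Rightarrow> 'f idt set \<Rightarrow> ('f, 'a) alg \<Rightarrow> ('a \<times> 'a) set \<Rightarrow> bool" where
  "good ar \<Sigma>V A \<theta> \<longleftrightarrow> congruence ar A \<theta> \<and> reg ar A \<theta> \<and>
    (\<forall>a\<in>car A. (\<forall>f xs. length xs = ar f \<and> set xs \<subseteq> \<theta>``{a} \<longrightarrow> opr A f xs \<in> \<theta>``{a}) \<and>
       (\<forall>e\<in>\<Sigma>V. \<forall>\<rho>. (\<forall>v. \<rho> v \<in> \<theta>``{a}) \<longrightarrow> eval A \<rho> (fst e) = eval A \<rho> (snd e)))"

lemma S_quot_iff: fixes ar :: "'f \<Rightarrow> nat" and A :: "('f, 'a) alg" assumes "congruence ar A \<theta>" "is_alg ar A"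
  shows "S_var ar (quot_alg A \<theta>) \<longleftrightarrow> reg ar A \<theta>"
proof
  have eq: "equiv (car A) \<theta>" using assms(1) unfolding congruence_def by auto
  assume S: "S_var ar (quot_alg A \<theta>)"
  show "reg ar A \<theta>" unfolding reg_def
  proof (intro allI impI)
    fix u v :: "('f, nat) trm" and \<rho> :: "nat \<Rightarrow> 'a" assume h: "wf_trm ar u \<and> wf_trm ar v \<and> vars u = vars v \<and> (\<forall>x. \<rho> x \<in> car A)"
    have "(u,v) \<in> regular_idts ar" using h by (simp add: regular_idts_def wf_idt_def)
    moreover have "\<forall>x. \<theta>``{\<rho> x} \<in> car (quot_alg A \<theta>)" using h by (auto simp: quot_alg_def quotientI)
    ultimately have "eval (quot_alg A \<theta>) (\<lambda>x. \<theta>``{\<rho> x}) u = eval (quot_alg A \<theta>) (\<lambda>x. \<theta>``{\<rho> x}) v"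
      using S unfolding Mod_def sat_def by fastforce
    then have "\<theta>``{eval A \<rho> u} = \<theta>``{eval A \<rho> v}" using eval_quot[OF assms, of \<rho>] h by simp
    then show "(eval A \<rho> u, eval A \<rho> v) \<in> \<theta>"
    proof (rule eq_equiv_class[OF _ eq])
      show "eval A \<rho> v \<in> car A" using eval_closed[OF assms(2)] h by blast
    qed
  qed
next
  have eq: "equiv (car A) \<theta>" using assms(1) unfolding congruence_def by auto
  assume R: "reg ar A \<theta>"
  show "S_var ar (quot_alg A \<theta>)" unfolding Mod_def sat_def
  proof (intro conjI ballI allI impI)
    show "is_alg ar (quot_alg A \<theta>)" unfolding is_alg_def
    proof (intro conjI allI impI)
      show "car (quot_alg A \<theta>) \<noteq> {}" using assms(2) by (auto simp: quot_alg_def is_alg_def quotient_def)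
      fix f Xs assume h: "length Xs = ar f \<and> set Xs \<subseteq> car (quot_alg A \<theta>)"
      have "(SOME x. x \<in> X) \<in> car A" if "X \<in> set Xs" for X
      proof -
        have X: "X \<in> car A // \<theta>" using h that by (auto simp: quot_alg_def)
        then have "X \<noteq> {}" using eq in_quotient_imp_non_empty by blast
        then have "(SOME x. x \<in> X) \<in> X" by (simp add: some_in_eq)
        then show ?thesis using X eq in_quotient_imp_subset by blast
      qed
      then have "set (map (\<lambda>X. SOME x. x \<in> X) Xs) \<subseteq> car A" by auto
      then have "opr A f (map (\<lambda>X. SOME x. x \<in> X) Xs) \<in> car A" using assms(2) h unfolding is_alg_def by auto
      then show "opr (quot_alg A \<theta>) f Xs \<in> car (quot_alg A \<theta>)" by (auto simp: quot_alg_def quotientI)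
    qed
  next
    fix e and \<rho> :: "nat \<Rightarrow> 'a set" assume e: "e \<in> regular_idts ar" and \<rho>: "\<forall>v. \<rho> v \<in> car (quot_alg A \<theta>)"
    define \<sigma> where "\<sigma> v = (SOME x. x \<in> \<rho> v)" for v
    have \<sigma>: "\<sigma> v \<in> car A \<and> \<rho> v = \<theta>``{\<sigma> v}" for v
    proof -
      have "\<rho> v \<in> car A // \<theta>" using \<rho> by (auto simp: quot_alg_def)
      then obtain x where x: "x \<in> car A" "\<rho> v = \<theta>``{x}" by (auto elim: quotientE)
      then have "x \<in> \<rho> v" using eq by (auto elim: equivE refl_onD)
      then have "\<sigma> v \<in> \<theta>``{x}" unfolding \<sigma>_def x(2)[symmetric] by (rule someI)
      then have "(x, \<sigma> v) \<in> \<theta>" by auto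
      then show ?thesis using x eq by (auto simp: equiv_class_eq dest: equiv_class_eq_iff[THEN iffD1])
    qed
    then have \<rho>eq: "\<rho> = (\<lambda>v. \<theta>``{\<sigma> v})" by auto
    have wf: "wf_trm ar (fst e)" "wf_trm ar (snd e)" "vars (fst e) = vars (snd e)"
      using e unfolding regular_idts_def wf_idt_def by auto
    have "(eval A \<sigma> (fst e), eval A \<sigma> (snd e)) \<in> \<theta>" using R wf \<sigma> unfolding reg_def by blast
    then show "eval (quot_alg A \<theta>) \<rho> (fst e) = eval (quot_alg A \<theta>) \<rho> (snd e)"
      unfolding \<rho>eq using eval_quot[OF assms, of \<sigma>] \<sigma> wf eq by (simp add: equiv_class_eq)
  qed
qed

lemma class_iff: assumes "congruence ar A \<theta>" "a \<in> car A"
  shows "Mod ar \<Sigma>V (class_alg A \<theta> a) \<longleftrightarrow>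
     (\<forall>f xs. length xs = ar f \<and> set xs \<subseteq> \<theta>``{a} \<longrightarrow> opr A f xs \<in> \<theta>``{a}) \<and>
       (\<forall>e\<in>\<Sigma>V. \<forall>\<rho>. (\<forall>v. \<rho> v \<in> \<theta>``{a}) \<longrightarrow> eval A \<rho> (fst e) = eval A \<rho> (snd e))"
proof -
  have "a \<in> \<theta>``{a}" using assms unfolding congruence_def by (auto elim: equivE refl_onD)
  then show ?thesis unfolding Mod_def is_alg_def sat_def eval_class by (auto simp: class_alg_def)
qed

lemma relmal_iff: "relmal ar \<Sigma>V \<Sigma>W A \<longleftrightarrow> Mod ar \<Sigma>W A \<and> (\<exists>\<theta>. good ar \<Sigma>V A \<theta>)"
proof -
  have "(congruence ar A \<theta> \<and> S_var ar (quot_alg A \<theta>) \<and>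
          (\<forall>a\<in>car A. Mod ar \<Sigma>V (class_alg A \<theta> a))) \<longleftrightarrow> good ar \<Sigma>V A \<theta>"
    if "is_alg ar A" for \<theta>
    using S_quot_iff[OF _ that, of \<theta>] class_iff[of ar A \<theta> _ \<Sigma>V] unfolding good_def by blast
  then show ?thesis unfolding relmal_def Mod_def by blast
qed



lemma list_all2_set1: "list_all2 P xs ys \<Longrightarrow> x \<in> set xs \<Longrightarrow> \<exists>y\<in>set ys. P x y"
  by (induction rule: list_all2_induct) auto
lemma list_all2_set2: "list_all2 P xs ys \<Longrightarrow> y \<in> set ys \<Longrightarrow> \<exists>x\<in>set xs. P x y"
  by (induction rule: list_all2_induct) auto

lemma equiv_reflD: "equiv A r \<Longrightarrow> x \<in> A \<Longrightarrow> (x,x) \<in> r"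
  unfolding equiv_def refl_on_def by blast
lemma equiv_symD: "equiv A r \<Longrightarrow> (x,y) \<in> r \<Longrightarrow> (y,x) \<in> r"
  unfolding equiv_def by (blast dest: symD)
lemma equiv_transD: "equiv A r \<Longrightarrow> (x,y) \<in> r \<Longrightarrow> (y,z) \<in> r \<Longrightarrow> (x,z) \<in> r"
  unfolding equiv_def by (blast dest: transD)
lemma equiv_subD: "equiv A r \<Longrightarrow> (x,y) \<in> r \<Longrightarrow> x \<in> A \<and> y \<in> A"
  unfolding equiv_def by blast

lemma regD: fixes u v :: "('f, nat) trm" shows "reg ar A \<theta> \<Longrightarrow> wf_trm ar u \<Longrightarrow> wf_trm ar v \<Longrightarrow> vars u = vars v \<Longrightarrow> (\<And>x. \<rho> x \<in> car A)
  \<Longrightarrow> (eval A \<rho> u, eval A \<rho> v) \<in> \<theta>"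
  unfolding reg_def apply (drule spec[where x=u], drule spec[where x=v], drule spec[where x=\<rho>]) by blast

lemma good_sub:
  fixes ar :: "'f \<Rightarrow> nat" and A B :: "('f, 'a) alg"
  assumes g: "good ar \<Sigma>V A \<theta>" and sub: "subalg ar B A" and wfV: "\<forall>e\<in>\<Sigma>V. wf_idt ar e"
  shows "good ar \<Sigma>V B (\<theta> \<inter> car B \<times> car B)"
proof -
  let ?\<theta> = "\<theta> \<inter> car B \<times> car B"
  have cong: "congruence ar A \<theta>" and R: "reg ar A \<theta>" and
    cl: "\<And>a. a \<in> car A \<Longrightarrow> (\<forall>f xs. length xs = ar f \<and> set xs \<subseteq> \<theta>``{a} \<longrightarrow> opr A f xs \<in> \<theta>``{a}) \<and>
       (\<forall>e\<in>\<Sigma>V. \<forall>\<rho>. (\<forall>v. \<rho> v \<in> \<theta>``{a}) \<longrightarrow> eval A \<rho> (fst e) = eval A \<rho> (snd e))"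
    using g unfolding good_def by auto
  have eq: "equiv (car A) \<theta>" using cong unfolding congruence_def by auto
  have BA: "car B \<subseteq> car A" and isB: "is_alg ar B"
    and opB: "\<And>f xs. length xs = ar f \<Longrightarrow> set xs \<subseteq> car B \<Longrightarrow> opr B f xs = opr A f xs"
    using sub unfolding subalg_def by auto
  have eqB: "equiv (car B) ?\<theta>"
    using eq BA unfolding equiv_def refl_on_def sym_def trans_def by blast
  have congB: "congruence ar B ?\<theta>" unfolding congruence_def
  proof (intro conjI allI impI eqB)
    fix f xs ys assume h: "length xs = ar f \<and> length ys = ar f \<and> list_all2 (\<lambda>x y. (x, y) \<in> ?\<theta>) xs ys"
    have sx: "set xs \<subseteq> car B" using h list_all2_set1 by fastforce
    have sy: "set ys \<subseteq> car B" using h list_all2_set2 by fastforce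
    have "list_all2 (\<lambda>x y. (x, y) \<in> \<theta>) xs ys" using h by (auto elim: list_all2_mono)
    then have "(opr A f xs, opr A f ys) \<in> \<theta>" using cong h unfolding congruence_def by blast
    moreover have "opr B f xs \<in> car B" "opr B f ys \<in> car B" using isB h sx sy unfolding is_alg_def by auto
    ultimately show "(opr B f xs, opr B f ys) \<in> ?\<theta>" using opB h sx sy by auto
  qed
  have regB: "reg ar B ?\<theta>" unfolding reg_def
  proof (intro allI impI)
    fix u v :: "('f, nat) trm" and \<rho> :: "nat \<Rightarrow> 'a" assume h: "wf_trm ar u \<and> wf_trm ar v \<and> vars u = vars v \<and> (\<forall>x. \<rho> x \<in> car B)"
    then have "(eval A \<rho> u, eval A \<rho> v) \<in> \<theta>" using R BA unfolding reg_def by blast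
    then show "(eval B \<rho> u, eval B \<rho> v) \<in> ?\<theta>"
      using eval_sub[OF sub, of u \<rho>] eval_sub[OF sub, of v \<rho>] eval_closed[OF isB, of u \<rho>] eval_closed[OF isB, of v \<rho>] h
      by auto
  qed
  have clB: "(\<forall>f xs. length xs = ar f \<and> set xs \<subseteq> ?\<theta>``{b} \<longrightarrow> opr B f xs \<in> ?\<theta>``{b}) \<and>
       (\<forall>e\<in>\<Sigma>V. \<forall>\<rho>. (\<forall>v. \<rho> v \<in> ?\<theta>``{b}) \<longrightarrow> eval B \<rho> (fst e) = eval B \<rho> (snd e))"
    if b: "b \<in> car B" for b
  proof (intro conjI allI impI ballI)
    have bA: "b \<in> car A" using b BA by auto
    fix f xs assume h: "length xs = ar f \<and> set xs \<subseteq> ?\<theta>``{b}"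
    then have "set xs \<subseteq> \<theta>``{b}" by auto
    then have "opr A f xs \<in> \<theta>``{b}" using cl[OF bA] h by blast
    moreover have "opr B f xs \<in> car B" using isB h unfolding is_alg_def by auto
    moreover have "set xs \<subseteq> car B" using h by auto
    ultimately show "opr B f xs \<in> ?\<theta>``{b}" using opB h b by auto
  next
    have bA: "b \<in> car A" using b BA by auto
    fix e and \<rho> :: "nat \<Rightarrow> 'a" assume e: "e \<in> \<Sigma>V" and \<rho>: "\<forall>v. \<rho> v \<in> ?\<theta>``{b}"
    have wf: "wf_trm ar (fst e)" "wf_trm ar (snd e)" using wfV e unfolding wf_idt_def by auto
    have "\<forall>v. \<rho> v \<in> \<theta>``{b}" using \<rho> by auto
    then have "eval A \<rho> (fst e) = eval A \<rho> (snd e)" using cl[OF bA] e by blast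
    moreover have "\<And>v. \<rho> v \<in> car B" using \<rho> by auto
    ultimately show "eval B \<rho> (fst e) = eval B \<rho> (snd e)"
      using eval_sub[OF sub wf(1), of \<rho>] eval_sub[OF sub wf(2), of \<rho>] by simp
  qed
  show ?thesis unfolding good_def using congB regB clB by blast
qed

lemma good_prod:
  fixes ar :: "'f \<Rightarrow> nat" and As :: "'i \<Rightarrow> ('f, 'a) alg" and \<Theta> :: "'i \<Rightarrow> ('a \<times> 'a) set"
  assumes g: "\<forall>i\<in>I. good ar \<Sigma>V (As i) (\<Theta> i)" and isA: "\<forall>i\<in>I. is_alg ar (As i)"
  shows "good ar \<Sigma>V (prod_alg I As) {(x,y). x \<in> car (prod_alg I As) \<and> y \<in> car (prod_alg I As) \<and> (\<forall>i\<in>I. (x i, y i) \<in> \<Theta> i)}"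
proof -
  let ?P = "prod_alg I As"
  let ?\<theta> = "{(x,y). x \<in> car ?P \<and> y \<in> car ?P \<and> (\<forall>i\<in>I. (x i, y i) \<in> \<Theta> i)}"
  have isP: "is_alg ar ?P" using isA by (rule is_alg_prod)
  have cong: "\<And>i. i\<in>I \<Longrightarrow> congruence ar (As i) (\<Theta> i)" and R: "\<And>i. i\<in>I \<Longrightarrow> reg ar (As i) (\<Theta> i)"
    and cl: "\<And>i a. i\<in>I \<Longrightarrow> a \<in> car (As i) \<Longrightarrow>
      (\<forall>f xs. length xs = ar f \<and> set xs \<subseteq> \<Theta> i``{a} \<longrightarrow> opr (As i) f xs \<in> \<Theta> i``{a}) \<and>
       (\<forall>e\<in>\<Sigma>V. \<forall>\<rho>. (\<forall>v. \<rho> v \<in> \<Theta> i``{a}) \<longrightarrow> eval (As i) \<rho> (fst e) = eval (As i) \<rho> (snd e))"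
    using g unfolding good_def by auto
  have eq: "\<And>i. i\<in>I \<Longrightarrow> equiv (car (As i)) (\<Theta> i)" using cong unfolding congruence_def by auto
  have mem: "\<And>x i. x \<in> car ?P \<Longrightarrow> i \<in> I \<Longrightarrow> x i \<in> car (As i)"
  proof -
    fix x i assume "x \<in> car ?P" "i \<in> I"
    then show "x i \<in> car (As i)" unfolding prod_alg_def alg.select_convs by (rule PiE_mem)
  qed
  have eqP: "equiv (car ?P) ?\<theta>"
  proof (rule equivI)
    show "?\<theta> \<subseteq> car ?P \<times> car ?P" by auto
    show "refl_on (car ?P) ?\<theta>" by (rule refl_onI) (auto intro: equiv_reflD[OF eq] mem)
    show "sym ?\<theta>" by (rule symI) (auto intro: equiv_symD[OF eq])
    show "trans ?\<theta>" by (rule transI) (auto intro: equiv_transD[OF eq])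
  qed
  have congP: "congruence ar ?P ?\<theta>" unfolding congruence_def
  proof (intro conjI allI impI eqP)
    fix f xs ys assume h: "length xs = ar f \<and> length ys = ar f \<and> list_all2 (\<lambda>x y. (x, y) \<in> ?\<theta>) xs ys"
    have sx: "set xs \<subseteq> car ?P" using h list_all2_set1 by fastforce
    have sy: "set ys \<subseteq> car ?P" using h list_all2_set2 by fastforce
    have inP: "opr ?P f xs \<in> car ?P" "opr ?P f ys \<in> car ?P" using isP h sx sy unfolding is_alg_def by auto
    have "(opr ?P f xs i, opr ?P f ys i) \<in> \<Theta> i" if i: "i \<in> I" for i
    proof -
      have "list_all2 (\<lambda>x y. (x, y) \<in> \<Theta> i) (map (\<lambda>x. x i) xs) (map (\<lambda>x. x i) ys)"
        using h i by (auto simp: list.rel_map elim: list_all2_mono)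
      then have "(opr (As i) f (map (\<lambda>x. x i) xs), opr (As i) f (map (\<lambda>x. x i) ys)) \<in> \<Theta> i"
        using cong[OF i] h unfolding congruence_def by simp
      then show ?thesis using i by (simp add: prod_alg_def)
    qed
    then show "(opr ?P f xs, opr ?P f ys) \<in> ?\<theta>" using inP by auto
  qed
  have regP: "reg ar ?P ?\<theta>" unfolding reg_def
  proof (intro allI impI)
    fix u v :: "('f, nat) trm" and \<rho> :: "nat \<Rightarrow> 'i \<Rightarrow> 'a"
    assume h: "wf_trm ar u \<and> wf_trm ar v \<and> vars u = vars v \<and> (\<forall>x. \<rho> x \<in> car ?P)"
    have \<rho>': "\<And>x. \<rho> x \<in> car ?P" using h by auto
    have "(eval ?P \<rho> u i, eval ?P \<rho> v i) \<in> \<Theta> i" if i: "i \<in> I" for i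
    proof -
      have "\<forall>x. \<rho> x i \<in> car (As i)" using mem \<rho>' i by blast
      then have "(eval (As i) (\<lambda>x. \<rho> x i) u, eval (As i) (\<lambda>x. \<rho> x i) v) \<in> \<Theta> i"
        using h by (intro regD[OF R[OF i]]) auto
      then show ?thesis using i by (simp add: eval_prod[OF \<rho>'])
    qed
    moreover have "eval ?P \<rho> u \<in> car ?P" "eval ?P \<rho> v \<in> car ?P"
      using eval_closed[OF isP, of _ \<rho>] h by auto
    ultimately show "(eval ?P \<rho> u, eval ?P \<rho> v) \<in> ?\<theta>" by auto
  qed
  have clP: "(\<forall>f xs. length xs = ar f \<and> set xs \<subseteq> ?\<theta>``{a} \<longrightarrow> opr ?P f xs \<in> ?\<theta>``{a}) \<and>
       (\<forall>e\<in>\<Sigma>V. \<forall>\<rho>. (\<forall>v. \<rho> v \<in> ?\<theta>``{a}) \<longrightarrow> eval ?P \<rho> (fst e) = eval ?P \<rho> (snd e))"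
    if a: "a \<in> car ?P" for a
  proof (intro conjI allI impI ballI)
    fix f xs assume h: "length xs = ar f \<and> set xs \<subseteq> ?\<theta>``{a}"
    have sx: "set xs \<subseteq> car ?P" using h by auto
    have inP: "opr ?P f xs \<in> car ?P" using isP h sx unfolding is_alg_def by auto
    have "(a i, opr ?P f xs i) \<in> \<Theta> i" if i: "i \<in> I" for i
    proof -
      have "set (map (\<lambda>x. x i) xs) \<subseteq> \<Theta> i``{a i}" using h i by auto
      then have "opr (As i) f (map (\<lambda>x. x i) xs) \<in> \<Theta> i``{a i}"
        using cl[OF i mem[OF a i]] h by auto
      then show ?thesis using i by (simp add: prod_alg_def)
    qed
    then show "opr ?P f xs \<in> ?\<theta>``{a}" using inP a by auto
  next
    fix e and \<rho> :: "nat \<Rightarrow> 'i \<Rightarrow> 'a" assume e: "e \<in> \<Sigma>V" and \<rho>: "\<forall>v. \<rho> v \<in> ?\<theta>``{a}"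
    have \<rho>': "\<And>x. \<rho> x \<in> car ?P" using \<rho> by auto
    show "eval ?P \<rho> (fst e) = eval ?P \<rho> (snd e)"
      unfolding eval_prod[OF \<rho>']
    proof (rule restrict_ext)
      fix i assume i: "i \<in> I"
      have "\<forall>v. \<rho> v i \<in> \<Theta> i``{a i}" using \<rho> i by auto
      moreover have "\<forall>\<rho>. (\<forall>v. \<rho> v \<in> \<Theta> i``{a i}) \<longrightarrow> eval (As i) \<rho> (fst e) = eval (As i) \<rho> (snd e)"
        using cl[OF i mem[OF a i]] e by blast
      ultimately show "eval (As i) (\<lambda>v. \<rho> v i) (fst e) = eval (As i) (\<lambda>v. \<rho> v i) (snd e)"
        by (drule_tac x="\<lambda>v. \<rho> v i" in spec) blast
    qed
  qed
  show ?thesis unfolding good_def using congP regP clP by blast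
qed



definition tb :: "('f, nat) trm \<Rightarrow> ('f, 'a) alg \<Rightarrow> 'a \<Rightarrow> 'a \<Rightarrow> 'a" where
  "tb t A a b = eval A (\<lambda>v. if v = 0 then a else b) t"

definition T :: "('f, nat) trm \<Rightarrow> ('f, nat) trm \<Rightarrow> ('f, nat) trm \<Rightarrow> ('f, nat) trm" where
  "T t x y = subst (\<lambda>v. if v = 0 then x else y) t"

lemma eval_T: "eval A \<rho> (T t x y) = tb t A (eval A \<rho> x) (eval A \<rho> y)"
  unfolding T_def tb_def eval_subst by (simp add: if_distrib)

lemma vars_T: "vars t = {0,1} \<Longrightarrow> vars (T t x y) = vars x \<union> vars y"
  unfolding T_def vars_subst by auto

lemma wf_T: "wf_trm ar t \<Longrightarrow> wf_trm ar x \<Longrightarrow> wf_trm ar y \<Longrightarrow> wf_trm ar (T t x y)"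
  unfolding T_def by (rule wf_subst) auto

lemma tb_hom: "hom ar A B h \<Longrightarrow> is_alg ar A \<Longrightarrow> wf_trm ar t \<Longrightarrow> a \<in> car A \<Longrightarrow> b \<in> car A
  \<Longrightarrow> h (tb t A a b) = tb t B (h a) (h b)"
  unfolding tb_def by (subst eval_hom[of ar A B h]) (auto simp: o_def if_distrib)

lemma tb_closed: "is_alg ar A \<Longrightarrow> wf_trm ar t \<Longrightarrow> a \<in> car A \<Longrightarrow> b \<in> car A \<Longrightarrow> tb t A a b \<in> car A"
  unfolding tb_def by (rule eval_closed) auto

lemma goodD_V: "good ar \<Sigma>V A \<theta> \<Longrightarrow> a \<in> car A \<Longrightarrow> e \<in> \<Sigma>V \<Longrightarrow> (\<And>v. \<rho> v \<in> \<theta>``{a})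
  \<Longrightarrow> eval A \<rho> (fst e) = eval A \<rho> (snd e)"
  unfolding good_def
  apply (drule conjunct2, drule conjunct2, drule bspec, assumption, drule conjunct2, drule bspec, assumption,
     drule spec[where x=\<rho>])
  by blast

lemma goodD_cl: "good ar \<Sigma>V A \<theta> \<Longrightarrow> a \<in> car A \<Longrightarrow> length xs = ar f \<Longrightarrow> set xs \<subseteq> \<theta>``{a}
  \<Longrightarrow> opr A f xs \<in> \<theta>``{a}"
  unfolding good_def by blast

lemma goodD_cong: "good ar \<Sigma>V A \<theta> \<Longrightarrow> congruence ar A \<theta>"
  unfolding good_def by blast

lemma goodD_reg: "good ar \<Sigma>V A \<theta> \<Longrightarrow> reg ar A \<theta>"
  unfolding good_def by blast

lemma goodD_eq: "good ar \<Sigma>V A \<theta> \<Longrightarrow> equiv (car A) \<theta>"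
  unfolding good_def congruence_def by blast

lemma list_all2_replicate1: "length ys = n \<Longrightarrow> (\<forall>y\<in>set ys. P x y) \<Longrightarrow> list_all2 P (replicate n x) ys"
  by (induction ys arbitrary: n) auto

lemma list_all2_preimage:
  "list_all2 (\<lambda>x y. (x, y) \<in> {(h a, h a') | a a'. (a, a') \<in> \<theta>}) xs ys
   \<Longrightarrow> \<exists>as bs. list_all2 (\<lambda>x y. (x, y) \<in> \<theta>) as bs \<and> xs = map h as \<and> ys = map h bs"
proof (induction rule: list_all2_induct)
  case Nil
  then show ?case by auto
next
  case (Cons x xs y ys)
  then obtain as bs where "list_all2 (\<lambda>x y. (x, y) \<in> \<theta>) as bs" "xs = map h as" "ys = map h bs" by blast
  moreover obtain a a' where "x = h a" "y = h a'" "(a, a') \<in> \<theta>" using Cons.hyps(1) by blast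
  ultimately show ?case by (intro exI[of _ "a # as"] exI[of _ "a' # bs"]) auto
qed

lemma psiI: "(a, a') \<in> \<theta> \<Longrightarrow> (h a, h a') \<in> {(h a, h a') | a a'. (a, a') \<in> \<theta>}"
  by blast

context
  fixes ar :: "'f \<Rightarrow> nat" and \<Sigma>V :: "'f idt set" and t :: "('f, nat) trm"
  assumes wft: "wf_trm ar t" and vt: "vars t = {0,1}" and tV: "(t, Var 0) \<in> \<Sigma>V"
begin

lemma tb_rel: assumes g: "good ar \<Sigma>V A \<theta>" and ab: "(a, b) \<in> \<theta>" shows "tb t A a b = a"
proof -
  have eq: "equiv (car A) \<theta>" using g by (rule goodD_eq)
  have a: "a \<in> car A" using equiv_subD[OF eq ab] by auto
  have "a \<in> \<theta>``{a}" using equiv_reflD[OF eq a] by auto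
  moreover have "b \<in> \<theta>``{a}" using ab by auto
  ultimately have "eval A (\<lambda>v. if v = 0 then a else b) (fst (t, Var 0)) = eval A (\<lambda>v. if v = 0 then a else b) (snd (t, Var 0))"
    using goodD_V[OF g a tV, of "\<lambda>v. if v = 0 then a else b"] by auto
  then show ?thesis by (simp add: tb_def)
qed

lemma tb_self: "good ar \<Sigma>V A \<theta> \<Longrightarrow> a \<in> car A \<Longrightarrow> tb t A a a = a"
  by (rule tb_rel) (auto intro: equiv_reflD goodD_eq)

lemma tb_comm: assumes g: "good ar \<Sigma>V A \<theta>" and a: "a \<in> car A" and b: "b \<in> car A"
  shows "(tb t A a b, tb t A b a) \<in> \<theta>"
proof -
  let ?\<rho> = "\<lambda>v::nat. if v = 0 then a else b"
  have "(eval A ?\<rho> (T t (Var 0) (Var 1)), eval A ?\<rho> (T t (Var 1) (Var 0))) \<in> \<theta>"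
    by (rule regD[OF goodD_reg[OF g]]) (auto simp: vars_T[OF vt] intro!: wf_T[OF wft] simp: a b)
  then show ?thesis by (simp add: eval_T)
qed

lemma tb_idem2: assumes g: "good ar \<Sigma>V A \<theta>" and a: "a \<in> car A" and b: "b \<in> car A"
  shows "(tb t A a (tb t A a b), tb t A a b) \<in> \<theta>"
proof -
  let ?\<rho> = "\<lambda>v::nat. if v = 0 then a else b"
  have "(eval A ?\<rho> (T t (Var 0) (T t (Var 0) (Var 1))), eval A ?\<rho> (T t (Var 0) (Var 1))) \<in> \<theta>"
    by (rule regD[OF goodD_reg[OF g]]) (auto simp: vars_T[OF vt] intro!: wf_T[OF wft] simp: a b)
  then show ?thesis by (simp add: eval_T)
qed

lemma tb_abs3: assumes g: "good ar \<Sigma>V A \<theta>" and a: "x \<in> car A" and b: "y \<in> car A" and c: "z \<in> car A"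
  shows "(tb t A x (tb t A y (tb t A x z)), tb t A y (tb t A x z)) \<in> \<theta>"
proof -
  let ?\<rho> = "\<lambda>v::nat. if v = 0 then x else if v = 1 then y else z"
  have "(eval A ?\<rho> (T t (Var 0) (T t (Var 1) (T t (Var 0) (Var 2)))),
         eval A ?\<rho> (T t (Var 1) (T t (Var 0) (Var 2)))) \<in> \<theta>"
    by (rule regD[OF goodD_reg[OF g]]) (auto simp: vars_T[OF vt] intro!: wf_T[OF wft] simp: a b c)
  then show ?thesis by (simp add: eval_T)
qed

lemma tb_cong: assumes g: "good ar \<Sigma>V A \<theta>" and "(a, a') \<in> \<theta>" "(b, b') \<in> \<theta>"
  shows "(tb t A a b, tb t A a' b') \<in> \<theta>"
  unfolding tb_def by (rule eval_cong[OF goodD_cong[OF g] wft]) (use assms in auto)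


lemma join_exists:
  assumes g: "good ar \<Sigma>V A \<theta>" and isA: "is_alg ar A" and h: "hom ar A B h"
    and a0: "a0 \<in> car A" "h a0 = c"
  shows "finite F \<Longrightarrow> F \<subseteq> car A \<Longrightarrow> (\<forall>x\<in>F. h x = c) \<Longrightarrow>
    \<exists>w\<in>car A. h w = c \<and> (\<forall>x\<in>F. (tb t A x w, w) \<in> \<theta>)"
proof (induction F rule: finite_induct)
  case empty
  then show ?case using a0 by auto
next
  case (insert y F)
  have eq: "equiv (car A) \<theta>" using g by (rule goodD_eq)
  obtain w where w: "w \<in> car A" "h w = c" "\<forall>x\<in>F. (tb t A x w, w) \<in> \<theta>" using insert by auto
  have y: "y \<in> car A" "h y = c" using insert.prems by auto
  have cc: "tb t B c c = c"
    using tb_hom[OF h isA wft a0(1) a0(1)] tb_self[OF g a0(1)] a0(2) by simp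
  let ?w = "tb t A y w"
  have w'A: "?w \<in> car A" using tb_closed[OF isA wft y(1) w(1)] .
  have hw': "h ?w = c" using tb_hom[OF h isA wft y(1) w(1)] y w cc by simp
  have "(tb t A x ?w, ?w) \<in> \<theta>" if x: "x \<in> insert y F" for x
  proof (cases "x = y")
    case True
    then show ?thesis using tb_idem2[OF g y(1) w(1)] by simp
  next
    case False
    then have xF: "x \<in> F" using x by auto
    have xA: "x \<in> car A" using xF insert.prems by auto
    have xw: "(tb t A x w, w) \<in> \<theta>" using w xF by auto
    have xwA: "tb t A x w \<in> car A" using tb_closed[OF isA wft xA w(1)] .
    have r1: "(tb t A x ?w, tb t A x (tb t A y (tb t A x w))) \<in> \<theta>"
      by (intro tb_cong[OF g] equiv_reflD[OF eq] xA y(1) equiv_symD[OF eq xw])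
    have r2: "(tb t A x (tb t A y (tb t A x w)), tb t A y (tb t A x w)) \<in> \<theta>"
      by (rule tb_abs3[OF g xA y(1) w(1)])
    have r3: "(tb t A y (tb t A x w), ?w) \<in> \<theta>"
      by (intro tb_cong[OF g] equiv_reflD[OF eq] y(1) xw)
    show ?thesis using equiv_transD[OF eq equiv_transD[OF eq r1 r2] r3] .
  qed
  then show ?case using w'A hw' by blast
qed

lemma good_hom:
  fixes A :: "('f, 'a) alg" and B :: "('f, 'b) alg"
  assumes g: "good ar \<Sigma>V A \<theta>" and isA: "is_alg ar A" and isB: "is_alg ar B" and h: "hom ar A B h"
    and surj: "h ` car A = car B" and wfV: "\<forall>e\<in>\<Sigma>V. wf_idt ar e"
  shows "good ar \<Sigma>V B {(h a, h a') | a a'. (a, a') \<in> \<theta>}"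
proof -
  let ?\<psi> = "{(h a, h a') | a a'. (a, a') \<in> \<theta>}"
  have cong: "congruence ar A \<theta>" using g by (rule goodD_cong)
  have eq: "equiv (car A) \<theta>" using g by (rule goodD_eq)
  have R: "reg ar A \<theta>" using g by (rule goodD_reg)
  have hA: "\<And>x. x \<in> car A \<Longrightarrow> h x \<in> car B" using h unfolding hom_def by auto
  have pre: "\<And>c. c \<in> car B \<Longrightarrow> \<exists>a\<in>car A. h a = c" using surj by (metis imageE)
  have psi_tb: "tb t B c d = c" if cd0: "(c, d) \<in> ?\<psi>" for c d
  proof -
    obtain a a' where aa: "c = h a" "d = h a'" "(a, a') \<in> \<theta>" using cd0 by blast
    then have "a \<in> car A" "a' \<in> car A" using equiv_subD[OF eq] by auto
    then show ?thesis using tb_hom[OF h isA wft] tb_rel[OF g aa(3)] aa by metis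
  qed
  have eqB: "equiv (car B) ?\<psi>"
  proof (rule equivI)
    show "?\<psi> \<subseteq> car B \<times> car B"
    proof
      fix p assume "p \<in> ?\<psi>"
      then obtain a a' where "p = (h a, h a')" "(a, a') \<in> \<theta>" by blast
      then show "p \<in> car B \<times> car B" using equiv_subD[OF eq] hA by simp
    qed
    show "refl_on (car B) ?\<psi>"
    proof (rule refl_onI)
      fix c assume "c \<in> car B"
      then obtain a where "a \<in> car A" "h a = c" using pre by blast
      then show "(c, c) \<in> ?\<psi>" using psiI[OF equiv_reflD[OF eq \<open>a \<in> car A\<close>], of h] by simp
    qed
    show "sym ?\<psi>"
    proof (rule symI)
      fix x y assume "(x, y) \<in> ?\<psi>"
      then obtain a a' where "x = h a" "y = h a'" "(a, a') \<in> \<theta>" by blast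
      then show "(y, x) \<in> ?\<psi>" using psiI[OF equiv_symD[OF eq], of a a' h] by simp
    qed
    show "trans ?\<psi>"
    proof (rule transI)
      fix c d e assume cd: "(c, d) \<in> ?\<psi>" and de: "(d, e) \<in> ?\<psi>"
      obtain a a' where aa: "c = h a" "d = h a'" "(a, a') \<in> \<theta>" using cd by blast
      obtain b b' where bb: "d = h b" "e = h b'" "(b, b') \<in> \<theta>" using de by blast
      have A: "a \<in> car A" "a' \<in> car A" "b \<in> car A" "b' \<in> car A" using aa bb equiv_subD[OF eq] by auto
      have ed: "(e, d) \<in> ?\<psi>" using bb psiI[OF equiv_symD[OF eq bb(3)], of h] by simp
      have hx: "h (tb t A a b) = c" using tb_hom[OF h isA wft A(1) A(3)] psi_tb[OF cd] aa bb by simp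
      have hy: "h (tb t A b' a') = e" using tb_hom[OF h isA wft A(4) A(2)] psi_tb[OF ed] aa bb by simp
      have "(tb t A a b, tb t A a' b') \<in> \<theta>" by (rule tb_cong[OF g aa(3) bb(3)])
      moreover have "(tb t A a' b', tb t A b' a') \<in> \<theta>" by (rule tb_comm[OF g A(2) A(4)])
      ultimately have "(tb t A a b, tb t A b' a') \<in> \<theta>" by (rule equiv_transD[OF eq])
      from psiI[OF this, of h] show "(c, e) \<in> ?\<psi>" unfolding hx hy .
    qed
  qed
  have compat: "(opr B f xs, opr B f ys) \<in> ?\<psi>"
    if hh: "length xs = ar f \<and> length ys = ar f \<and> list_all2 (\<lambda>x y. (x, y) \<in> ?\<psi>) xs ys" for f xs ys
  proof -
    have "\<exists>as bs. list_all2 (\<lambda>x y. (x, y) \<in> \<theta>) as bs \<and> xs = map h as \<and> ys = map h bs"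
      by (rule list_all2_preimage) (use hh in simp)
    then obtain as bs where ab: "list_all2 (\<lambda>x y. (x, y) \<in> \<theta>) as bs" "xs = map h as" "ys = map h bs"
      by blast
    have sa: "set as \<subseteq> car A"
    proof
      fix x assume "x \<in> set as"
      then obtain y where "(x, y) \<in> \<theta>" using list_all2_set1[OF ab(1)] by blast
      then show "x \<in> car A" using equiv_subD[OF eq] by blast
    qed
    have sb: "set bs \<subseteq> car A"
    proof
      fix y assume "y \<in> set bs"
      then obtain x where "(x, y) \<in> \<theta>" using list_all2_set2[OF ab(1)] by blast
      then show "y \<in> car A" using equiv_subD[OF eq] by blast
    qed
    have la: "length as = ar f" "length bs = ar f" using hh ab by auto
    have r: "(opr A f as, opr A f bs) \<in> \<theta>" using cong la ab(1) unfolding congruence_def by simp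
    have "h (opr A f as) = opr B f (map h as)" using h la sa unfolding hom_def by simp
    moreover have "h (opr A f bs) = opr B f (map h bs)" using h la sb unfolding hom_def by simp
    ultimately have e1: "h (opr A f as) = opr B f xs" and e2: "h (opr A f bs) = opr B f ys" using ab by simp_all
    show ?thesis unfolding e1[symmetric] e2[symmetric] using r by (rule psiI)
  qed
  have congB: "congruence ar B ?\<psi>" unfolding congruence_def using eqB compat by blast
  have regB: "reg ar B ?\<psi>" unfolding reg_def
  proof (intro allI impI)
    fix u v :: "('f, nat) trm" and \<rho> :: "nat \<Rightarrow> 'b"
    assume hh: "wf_trm ar u \<and> wf_trm ar v \<and> vars u = vars v \<and> (\<forall>x. \<rho> x \<in> car B)"
    define \<sigma> where "\<sigma> x = (SOME a. a \<in> car A \<and> h a = \<rho> x)" for x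
    have \<sigma>: "\<sigma> x \<in> car A \<and> h (\<sigma> x) = \<rho> x" for x
    proof -
      obtain a where "a \<in> car A" "h a = \<rho> x" using pre hh by blast
      then show ?thesis unfolding \<sigma>_def by (intro someI[of "\<lambda>a. a \<in> car A \<and> h a = \<rho> x"]) auto
    qed
    have hs: "h \<circ> \<sigma> = \<rho>" using \<sigma> by (auto simp: fun_eq_iff)
    have r: "(eval A \<sigma> u, eval A \<sigma> v) \<in> \<theta>" using hh \<sigma> by (intro regD[OF R]) auto
    have e1: "h (eval A \<sigma> u) = eval B \<rho> u" and e2: "h (eval A \<sigma> v) = eval B \<rho> v"
      using eval_hom[OF h isA, of u \<sigma>] eval_hom[OF h isA, of v \<sigma>] hh \<sigma> hs by auto
    show "(eval B \<rho> u, eval B \<rho> v) \<in> ?\<psi>" unfolding e1[symmetric] e2[symmetric] using r by (rule psiI)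
  qed
  have clB: "opr B f xs \<in> ?\<psi>``{c}" if c: "c \<in> car B" and hh: "length xs = ar f" "set xs \<subseteq> ?\<psi>``{c}" for c f xs
  proof -
    obtain a where a: "a \<in> car A" "h a = c" using pre c by blast
    let ?rs = "replicate (ar f) a"
    have "set ?rs \<subseteq> \<theta>``{a}" using equiv_reflD[OF eq a(1)] by auto
    then have r: "opr A f ?rs \<in> \<theta>``{a}" using goodD_cl[OF g a(1)] by simp
    have "set ?rs \<subseteq> car A" "length ?rs = ar f" using a by auto
    then have "h (opr A f ?rs) = opr B f (map h ?rs)" using h unfolding hom_def by blast
    then have hr: "h (opr A f ?rs) = opr B f (replicate (ar f) c)" using a by simp
    have "(a, opr A f ?rs) \<in> \<theta>" using r by simp
    from psiI[OF this, of h] have 1: "(c, opr B f (replicate (ar f) c)) \<in> ?\<psi>" using a hr by simp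
    have "list_all2 (\<lambda>x y. (x, y) \<in> ?\<psi>) (replicate (ar f) c) xs"
    proof (rule list_all2_replicate1)
      show "length xs = ar f" using hh by simp
      show "\<forall>y\<in>set xs. (c, y) \<in> ?\<psi>"
      proof
        fix y assume "y \<in> set xs"
        then have "y \<in> ?\<psi>``{c}" using hh by blast
        then show "(c, y) \<in> ?\<psi>" by (rule ImageE) simp
      qed
    qed
    then have 2: "(opr B f (replicate (ar f) c), opr B f xs) \<in> ?\<psi>" using compat hh by simp
    show ?thesis using equiv_transD[OF eqB 1 2] by simp
  qed
  have VB: "eval B \<rho> (fst e) = eval B \<rho> (snd e)"
    if c: "c \<in> car B" and e: "e \<in> \<Sigma>V" and \<rho>: "\<forall>v. \<rho> v \<in> ?\<psi>``{c}" for c e \<rho>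
  proof -
    let ?X = "vars (fst e) \<union> vars (snd e)"
    have fin: "finite ?X" by (simp add: finite_vars)
    have wf: "wf_trm ar (fst e)" "wf_trm ar (snd e)" using wfV e unfolding wf_idt_def by auto
    have "\<exists>p. p \<in> \<theta> \<and> h (fst p) = c \<and> h (snd p) = \<rho> v" for v
    proof -
      have "(c, \<rho> v) \<in> ?\<psi>" using \<rho> by simp
      then obtain b b' where "c = h b" "\<rho> v = h b'" "(b, b') \<in> \<theta>" by blast
      then show ?thesis by (intro exI[of _ "(b, b')"]) simp
    qed
    then have "\<forall>v. \<exists>p. p \<in> \<theta> \<and> h (fst p) = c \<and> h (snd p) = \<rho> v" by blast
    then obtain P where P: "\<forall>v. P v \<in> \<theta> \<and> h (fst (P v)) = c \<and> h (snd (P v)) = \<rho> v"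
      by (rule choice[THEN exE])
    define B1 where "B1 v = fst (P v)" for v
    define B2 where "B2 v = snd (P v)" for v
    have B12: "(B1 v, B2 v) \<in> \<theta> \<and> h (B1 v) = c \<and> h (B2 v) = \<rho> v" for v
      using P unfolding B1_def B2_def by simp
    have B1A': "B1 v \<in> car A \<and> B2 v \<in> car A" for v using B12[of v] equiv_subD[OF eq] by blast
    have B1A: "B1 v \<in> car A" "B2 v \<in> car A" for v using B1A'[of v] by simp_all
    obtain a0 where a0: "a0 \<in> car A" "h a0 = c" using pre c by blast
    obtain w where w: "w \<in> car A" "h w = c" "\<forall>x\<in>B1 ` ?X. (tb t A x w, w) \<in> \<theta>"
    proof -
      have "finite (B1 ` ?X)" using fin by simp
      moreover have "B1 ` ?X \<subseteq> car A" using B1A by auto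
      moreover have "\<forall>x\<in>B1 ` ?X. h x = c" using B12 by auto
      ultimately have "\<exists>w\<in>car A. h w = c \<and> (\<forall>x\<in>B1 ` ?X. (tb t A x w, w) \<in> \<theta>)"
        by (rule join_exists[OF g isA h a0])
      then show ?thesis using that by blast
    qed
    define \<sigma> where "\<sigma> v = (if v \<in> ?X then tb t A (B2 v) w else w)" for v
    have \<sigma>cl: "\<sigma> v \<in> \<theta>``{w}" for v
    proof (cases "v \<in> ?X")
      case True
      have "(tb t A (B2 v) w, tb t A (B1 v) w) \<in> \<theta>"
        using B12[of v] by (intro tb_cong[OF g equiv_symD[OF eq] equiv_reflD[OF eq w(1)]]) simp
      moreover have "(tb t A (B1 v) w, w) \<in> \<theta>" using w True by auto
      ultimately have "(tb t A (B2 v) w, w) \<in> \<theta>" by (rule equiv_transD[OF eq])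
      then have "(w, tb t A (B2 v) w) \<in> \<theta>" by (rule equiv_symD[OF eq])
      then show ?thesis using True unfolding \<sigma>_def by simp
    next
      case False
      then show ?thesis using equiv_reflD[OF eq w(1)] unfolding \<sigma>_def by simp
    qed
    have \<sigma>A: "\<sigma> v \<in> car A" for v
    proof -
      have "(w, \<sigma> v) \<in> \<theta>" using \<sigma>cl[of v] by simp
      then show ?thesis using equiv_subD[OF eq] by simp
    qed
    have h\<sigma>: "h (\<sigma> v) = \<rho> v" if v: "v \<in> ?X" for v
    proof -
      have "h (\<sigma> v) = tb t B (\<rho> v) c" using v tb_hom[OF h isA wft B1A(2) w(1)] B12 w unfolding \<sigma>_def by simp
      moreover have "(c, \<rho> v) \<in> ?\<psi>" using \<rho> by simp
      then have "(\<rho> v, c) \<in> ?\<psi>" by (rule equiv_symD[OF eqB])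
      ultimately show ?thesis using psi_tb by simp
    qed
    have "eval B \<rho> (fst e) = eval B (h \<circ> \<sigma>) (fst e)" using h\<sigma> by (intro eval_vars) auto
    also have "\<dots> = h (eval A \<sigma> (fst e))" using eval_hom[OF h isA wf(1) \<sigma>A] by simp
    also have "\<dots> = h (eval A \<sigma> (snd e))" using goodD_V[OF g w(1) e \<sigma>cl] by simp
    also have "\<dots> = eval B (h \<circ> \<sigma>) (snd e)" using eval_hom[OF h isA wf(2) \<sigma>A] by simp
    also have "\<dots> = eval B \<rho> (snd e)" using h\<sigma> by (intro eval_vars) auto
    finally show ?thesis .
  qed
  show ?thesis unfolding good_def using congB regB clB VB by (intro conjI ballI allI impI) auto
qed

end


theorem corollary5p5:
  fixes ar :: "'f \<Rightarrow> nat" and \<Sigma>V \<Sigma>W :: "'f idt set" and t :: "('f, nat) trm"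
  assumes "plural ar"
    and "\<forall>e\<in>\<Sigma>V. wf_idt ar e" and "\<forall>e\<in>\<Sigma>W. wf_idt ar e"
    and "t \<in> T2 ar" and "(t, Var 0) \<in> \<Sigma>V"
  shows "(\<forall>(A :: ('f, 'a) alg) (B :: ('f, 'b) alg) h.
            relmal ar \<Sigma>V \<Sigma>W A \<and> is_alg ar B \<and> hom ar A B h \<and> h ` car A = car B
              \<longrightarrow> relmal ar \<Sigma>V \<Sigma>W B)
       \<and> (\<forall>(A :: ('f, 'c) alg) B.
            relmal ar \<Sigma>V \<Sigma>W A \<and> subalg ar B A \<longrightarrow> relmal ar \<Sigma>V \<Sigma>W B)
       \<and> (\<forall>(I :: 'i set) (As :: 'i \<Rightarrow> ('f, 'd) alg).
            (\<forall>i\<in>I. relmal ar \<Sigma>V \<Sigma>W (As i)) \<longrightarrow> relmal ar \<Sigma>V \<Sigma>W (prod_alg I As))"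
proof (intro conjI allI impI)
  have wft: "wf_trm ar t" and vt: "vars t = {0,1}" using assms(4) unfolding T2_def by auto
  note tV = assms(5)
  fix A :: "('f, 'a) alg" and B :: "('f, 'b) alg" and h
  assume H: "relmal ar \<Sigma>V \<Sigma>W A \<and> is_alg ar B \<and> hom ar A B h \<and> h ` car A = car B"
  have rA: "relmal ar \<Sigma>V \<Sigma>W A" and isB: "is_alg ar B" and hB: "hom ar A B h" and sB: "h ` car A = car B"
    using H by simp_all
  obtain \<theta> where MA: "Mod ar \<Sigma>W A" and g: "good ar \<Sigma>V A \<theta>" using rA unfolding relmal_iff by blast
  have isA: "is_alg ar A" using MA unfolding Mod_def by simp
  have "Mod ar \<Sigma>W B" by (rule Mod_hom[OF MA isB hB sB assms(3)])
  moreover have "good ar \<Sigma>V B {(h a, h a') | a a'. (a, a') \<in> \<theta>}"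
    by (rule good_hom[OF wft vt tV g isA isB hB sB assms(2)])
  ultimately show "relmal ar \<Sigma>V \<Sigma>W B" unfolding relmal_iff by blast
next
  fix A :: "('f, 'c) alg" and B
  assume H: "relmal ar \<Sigma>V \<Sigma>W A \<and> subalg ar B A"
  have rA: "relmal ar \<Sigma>V \<Sigma>W A" and sub: "subalg ar B A" using H by simp_all
  obtain \<theta> where MA: "Mod ar \<Sigma>W A" and g: "good ar \<Sigma>V A \<theta>" using rA unfolding relmal_iff by blast
  have "Mod ar \<Sigma>W B" by (rule Mod_sub[OF MA sub assms(3)])
  moreover have "good ar \<Sigma>V B (\<theta> \<inter> car B \<times> car B)" by (rule good_sub[OF g sub assms(2)])
  ultimately show "relmal ar \<Sigma>V \<Sigma>W B" unfolding relmal_iff by blast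
next
  fix I :: "'i set" and As :: "'i \<Rightarrow> ('f, 'd) alg"
  assume H: "\<forall>i\<in>I. relmal ar \<Sigma>V \<Sigma>W (As i)"
  then have MA: "\<forall>i\<in>I. Mod ar \<Sigma>W (As i)" and "\<forall>i\<in>I. \<exists>\<theta>. good ar \<Sigma>V (As i) \<theta>"
    unfolding relmal_iff by blast+
  from bchoice[OF this(2)] obtain \<Theta> where g: "\<forall>i\<in>I. good ar \<Sigma>V (As i) (\<Theta> i)" by blast
  have isA: "\<forall>i\<in>I. is_alg ar (As i)" using MA unfolding Mod_def by simp
  have "Mod ar \<Sigma>W (prod_alg I As)" using Mod_prod[OF MA] .
  moreover have "good ar \<Sigma>V (prod_alg I As) {(x,y). x \<in> car (prod_alg I As) \<and> y \<in> car (prod_alg I As) \<and> (\<forall>i\<in>I. (x i, y i) \<in> \<Theta> i)}"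
    using good_prod[OF g isA] .
  ultimately show "relmal ar \<Sigma>V \<Sigma>W (prod_alg I As)" unfolding relmal_iff by blast
qed

end
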